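(* Let $r>0$ and let $Z$ be a set of homeomorphisms $[0,r)\to[0,r)$ such that: $(\alpha)z\ge\alpha$ for all $z\in Z$ and $\alpha\in[0,r)$; $\mathrm{supp}(z)$ is an interval for every $z\in Z$; and $\bigcup_{z\in Z}\mathrm{supp}(z)$ is dense in $(0,r)$. Let $f$ be a permutation of $[0,r)$ that commutes with every $z\in Z$, is right-continuous at every point of $[0,r)$, and has finitely many points of discontinuity. Then $f$ is continuous.
   Context: Maps act on the right. For a permutation $x$ of a set $S$, $\mathrm{fix}(x)$ is its set of fixed points and $\mathrm{supp}(x)=S\setminus\mathrm{fix}(x)$. *)

theory Defs
  imports "HOL-Analysis.Analysis"
begin

definition supp_on :: "real set \<Rightarrow> (real \<Rightarrow> real) \<Rightarrow> real set" where
  "supp_on S z = {a \<in> S. z a \<noteq> a}"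

end

theory Submission
  imports Defs
begin


lemma ivl: "is_interval (I::real set) \<Longrightarrow> a \<in> I \<Longrightarrow> b \<in> I \<Longrightarrow> a \<le> c \<Longrightarrow> c \<le> b \<Longrightarrow> c \<in> I"
  unfolding is_interval_1 by blast

lemma supp_pres:
  fixes h :: "real \<Rightarrow> real"
  assumes maps: "\<forall>a\<in>S. h a \<in> S" and inj: "inj_on h S" and t: "t \<in> supp_on S h"
  shows "h t \<in> supp_on S h"
proof -
  have "t \<in> S" "h t \<noteq> t" using t by (auto simp: supp_on_def)
  moreover have "h t \<in> S" using maps \<open>t \<in> S\<close> by auto
  ultimately have "h (h t) \<noteq> h t" using inj by (metis inj_onD)
  then show ?thesis using \<open>h t \<in> S\<close> by (simp add: supp_on_def)
qed

lemma iter_supp: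
  fixes h :: "real \<Rightarrow> real"
  assumes maps: "\<forall>a\<in>S. h a \<in> S" and inj: "inj_on h S" and t: "t \<in> supp_on S h"
  shows "(h^^k) t \<in> supp_on S h"
  by (induction k) (auto simp: t supp_pres[OF maps inj])

lemma iter_up:
  fixes h :: "real \<Rightarrow> real"
  assumes maps: "\<forall>a\<in>S. h a \<in> S" and inj: "inj_on h S" and up: "\<forall>a\<in>S. a \<le> h a"
    and t: "t \<in> supp_on S h"
  shows "t \<le> (h^^k) t"
proof (induction k)
  case 0 then show ?case by simp
next
  case (Suc k)
  have "(h^^k) t \<in> S" using iter_supp[OF maps inj t] by (simp add: supp_on_def)
  then have "(h^^k) t \<le> h ((h^^k) t)" using up by blast
  then show ?case using Suc by simp
qed

lemma iter_down:
  fixes h :: "real \<Rightarrow> real"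
  assumes maps: "\<forall>a\<in>S. h a \<in> S" and inj: "inj_on h S" and up: "\<forall>a\<in>S. h a \<le> a"
    and t: "t \<in> supp_on S h"
  shows "(h^^k) t \<le> t"
proof (induction k)
  case 0 then show ?case by simp
next
  case (Suc k)
  have "(h^^k) t \<in> S" using iter_supp[OF maps inj t] by (simp add: supp_on_def)
  then have "h ((h^^k) t) \<le> (h^^k) t" using up by blast
  then show ?case using Suc by simp
qed

lemma iter_comm:
  fixes h f :: "real \<Rightarrow> real"
  assumes "\<forall>a\<in>S. h a \<in> S" "\<forall>a\<in>S. h (f a) = f (h a)" "a \<in> S"
  shows "f ((h^^k) a) = (h^^k) (f a) \<and> (h^^k) a \<in> S"
proof (induction k)
  case 0 then show ?case using assms(3) by simp
next
  case (Suc k)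
  have "f ((h^^Suc k) a) = f (h ((h^^k) a))" by simp
  also have "\<dots> = h (f ((h^^k) a))" using assms(2) Suc by (metis)
  also have "\<dots> = (h^^Suc k) (f a)" using Suc by simp
  finally show ?case using Suc assms(1) by simp
qed

lemma dyn_up:
  fixes h :: "real \<Rightarrow> real" and S :: "real set"
  assumes cont: "continuous_on S h" and maps: "\<forall>a\<in>S. h a \<in> S" and inj: "inj_on h S"
    and up: "\<forall>a\<in>S. a \<le> h a"
    and int: "is_interval (supp_on S h)" and Sint: "is_interval S"
    and d: "d \<in> S" "h d = d"
    and x: "x \<in> supp_on S h" and u: "u \<in> supp_on S h"
    and xd: "x < d"
  shows "\<exists>q. ((\<lambda>k. (h^^k) u) \<longlonglongrightarrow> q) \<and> x \<le> q \<and> q \<le> d"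
    and "\<forall>k. x \<le> (h^^k) x \<and> (h^^k) x < d"
proof -
  have below: "t < d" if t: "t \<in> supp_on S h" for t
  proof (rule ccontr)
    assume "\<not> t < d"
    then have "d \<in> supp_on S h" using ivl[OF int x t, of d] ivl[OF int t x, of d] xd by linarith
    then show False using d by (simp add: supp_on_def)
  qed
  define s where "s = (\<lambda>k. (h^^k) u)"
  have sk: "s k \<in> supp_on S h" for k unfolding s_def by (rule iter_supp[OF maps inj u])
  have skS: "s k \<in> S" for k using sk[of k] by (simp add: supp_on_def)
  have inc: "incseq s"
    by (rule incseq_SucI) (use up skS in \<open>auto simp: s_def\<close>)
  have bdd: "bdd_above (range s)" using below sk by (auto intro!: bdd_aboveI[of _ d] less_imp_le)
  define q where "q = (SUP k. s k)"
  have lim: "s \<longlonglongrightarrow> q" unfolding q_def by (rule LIMSEQ_incseq_SUP[OF bdd inc])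
  have skd: "s k \<le> d" for k using below[OF sk[of k]] by simp
  have qd: "q \<le> d" unfolding q_def by (rule cSUP_least) (use skd in auto)
  have uq: "u \<le> q" unfolding q_def using cSUP_upper[OF _ bdd, of 0] by (simp add: s_def)
  have uS: "u \<in> S" using u by (simp add: supp_on_def)
  have qS: "q \<in> S" using ivl[OF Sint uS d(1), of q] ivl[OF Sint d(1) uS, of q] uq qd by linarith
  have l1: "(\<lambda>k. h (s k)) \<longlonglongrightarrow> h q"
    using continuous_on_tendsto_compose[OF cont lim qS] skS by auto
  have "(\<lambda>k. s (Suc k)) \<longlonglongrightarrow> q" using lim by (rule LIMSEQ_Suc)
  then have "(\<lambda>k. h (s k)) \<longlonglongrightarrow> q" by (simp add: s_def)
  with l1 have hq: "h q = q" using LIMSEQ_unique by blast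
  have "x \<le> q"
  proof (rule ccontr)
    assume "\<not> x \<le> q"
    then have "q \<in> supp_on S h" using ivl[OF int u x, of q] ivl[OF int x u, of q] uq by linarith
    then show False using hq by (simp add: supp_on_def)
  qed
  then show "\<exists>q. ((\<lambda>k. (h^^k) u) \<longlonglongrightarrow> q) \<and> x \<le> q \<and> q \<le> d"
    using lim qd unfolding s_def by blast
  show "\<forall>k. x \<le> (h^^k) x \<and> (h^^k) x < d"
    using iter_up[OF maps inj up x] below iter_supp[OF maps inj x] by auto
qed

lemma dyn_down:
  fixes h :: "real \<Rightarrow> real" and S :: "real set"
  assumes cont: "continuous_on S h" and maps: "\<forall>a\<in>S. h a \<in> S" and inj: "inj_on h S"
    and down: "\<forall>a\<in>S. h a \<le> a"
    and int: "is_interval (supp_on S h)" and Sint: "is_interval S"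
    and d: "d \<in> S" "h d = d"
    and x: "x \<in> supp_on S h" and u: "u \<in> supp_on S h"
    and xd: "d < x"
  shows "\<exists>q. ((\<lambda>k. (h^^k) u) \<longlonglongrightarrow> q) \<and> q \<le> x \<and> d \<le> q"
    and "\<forall>k. (h^^k) x \<le> x \<and> d < (h^^k) x"
proof -
  have above: "d < t" if t: "t \<in> supp_on S h" for t
  proof (rule ccontr)
    assume "\<not> d < t"
    then have "d \<in> supp_on S h" using ivl[OF int x t, of d] ivl[OF int t x, of d] xd by linarith
    then show False using d by (simp add: supp_on_def)
  qed
  define s where "s = (\<lambda>k. (h^^k) u)"
  have sk: "s k \<in> supp_on S h" for k unfolding s_def by (rule iter_supp[OF maps inj u])
  have skS: "s k \<in> S" for k using sk[of k] by (simp add: supp_on_def)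
  have dec: "decseq s"
    by (rule decseq_SucI) (use down skS in \<open>auto simp: s_def\<close>)
  have bdd: "bdd_below (range s)" using above sk by (auto intro!: bdd_belowI[of _ d] less_imp_le)
  define q where "q = (INF k. s k)"
  have lim: "s \<longlonglongrightarrow> q" unfolding q_def by (rule LIMSEQ_decseq_INF[OF bdd dec])
  have skd: "d \<le> s k" for k using above[OF sk[of k]] by simp
  have qd: "d \<le> q" unfolding q_def by (rule cINF_greatest) (use skd in auto)
  have uq: "q \<le> u" unfolding q_def using cINF_lower[OF bdd, of 0] by (simp add: s_def)
  have uS: "u \<in> S" using u by (simp add: supp_on_def)
  have qS: "q \<in> S" using ivl[OF Sint uS d(1), of q] ivl[OF Sint d(1) uS, of q] uq qd by linarith
  have l1: "(\<lambda>k. h (s k)) \<longlonglongrightarrow> h q"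
    using continuous_on_tendsto_compose[OF cont lim qS] skS by auto
  have "(\<lambda>k. s (Suc k)) \<longlonglongrightarrow> q" using lim by (rule LIMSEQ_Suc)
  then have "(\<lambda>k. h (s k)) \<longlonglongrightarrow> q" by (simp add: s_def)
  with l1 have hq: "h q = q" using LIMSEQ_unique by blast
  have "q \<le> x"
  proof (rule ccontr)
    assume "\<not> q \<le> x"
    then have "q \<in> supp_on S h" using ivl[OF int u x, of q] ivl[OF int x u, of q] uq by linarith
    then show False using hq by (simp add: supp_on_def)
  qed
  then show "\<exists>q. ((\<lambda>k. (h^^k) u) \<longlonglongrightarrow> q) \<and> q \<le> x \<and> d \<le> q"
    using lim qd unfolding s_def by blast
  show "\<forall>k. (h^^k) x \<le> x \<and> d < (h^^k) x"
    using iter_down[OF maps inj down x] above iter_supp[OF maps inj x] by auto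
qed



theorem lemma3p2:
  fixes r :: real and Z :: "(real \<Rightarrow> real) set" and f :: "real \<Rightarrow> real"
  assumes "r > 0"
    and "\<forall>z\<in>Z. \<exists>g. homeomorphism {0..<r} {0..<r} z g"
    and "\<forall>z\<in>Z. \<forall>a\<in>{0..<r}. z a \<ge> a"
    and "\<forall>z\<in>Z. is_interval (supp_on {0..<r} z)"
    and "{0<..<r} \<subseteq> closure (\<Union>z\<in>Z. supp_on {0..<r} z)"
    and "bij_betw f {0..<r} {0..<r}"
    and "\<forall>z\<in>Z. \<forall>a\<in>{0..<r}. z (f a) = f (z a)"
    and "\<forall>a\<in>{0..<r}. continuous (at_right a) f"
    and "finite {a \<in> {0..<r}. \<not> continuous (at a within {0..<r}) f}"
  shows "continuous_on {0..<r} f"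
proof -
  define S where "S = {0..<r::real}"
  define D where "D = {a \<in> S. \<not> continuous (at a within S) f}"
  have finD: "finite D" using assms(9) by (simp add: D_def S_def)
  have Sint: "is_interval S" unfolding S_def is_interval_1 by auto
  have fS: "\<forall>a\<in>S. f a \<in> S" using assms(6) unfolding S_def by (meson bij_betw_apply)
  have finj: "inj_on f S" using assms(6) unfolding S_def by (rule bij_betw_imp_inj_on)
  have zfacts: "continuous_on S z \<and> (\<forall>a\<in>S. z a \<in> S) \<and> inj_on z S \<and> (\<forall>a\<in>S. a \<le> z a)
      \<and> is_interval (supp_on S z) \<and> (\<forall>a\<in>S. z (f a) = f (z a))
      \<and> (\<exists>g. continuous_on S g \<and> (\<forall>a\<in>S. g a \<in> S) \<and> (\<forall>a\<in>S. g (z a) = a) \<and> (\<forall>a\<in>S. z (g a) = a))"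
    if z: "z \<in> Z" for z
  proof -
    obtain g where g: "homeomorphism S S z g" using assms(2) z unfolding S_def by blast
    have hd: "(\<forall>x\<in>S. g (z x) = x) \<and> z ` S = S \<and> continuous_on S z \<and> (\<forall>y\<in>S. z (g y) = y) \<and> g ` S = S \<and> continuous_on S g"
      using g unfolding homeomorphism_def .
    then have a1: "\<forall>x\<in>S. g (z x) = x" and a2: "z ` S = S" and a3: "continuous_on S z"
      and a4: "\<forall>y\<in>S. z (g y) = y" and a5: "g ` S = S" and a6: "continuous_on S g"
      by blast+
    have a7: "inj_on z S" by (rule inj_on_inverseI[where g=g]) (use a1 in blast)
    have a8: "\<forall>a\<in>S. z a \<in> S" using a2 by blast
    have a9: "\<forall>a\<in>S. g a \<in> S" using a5 by blast
    have b1: "\<forall>a\<in>S. a \<le> z a" using assms(3) z unfolding S_def by blast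
    have b2: "is_interval (supp_on S z)" using assms(4) z unfolding S_def by blast
    have b3: "\<forall>a\<in>S. z (f a) = f (z a)" using assms(7) z unfolding S_def by blast
    show ?thesis
      apply (intro conjI exI[of _ g])
      by (fact a3 a8 a7 b1 b2 b3 a6 a9 a1 a4)+
  qed
  have fixD: "z d = d" if z: "z \<in> Z" and d: "d \<in> D" for z d
  proof -
    obtain g where zc: "continuous_on S z" and zS: "\<forall>a\<in>S. z a \<in> S" and zinj: "inj_on z S"
      and zup: "\<forall>a\<in>S. a \<le> z a" and zf: "\<forall>a\<in>S. z (f a) = f (z a)"
      and gc: "continuous_on S g" and gS: "\<forall>a\<in>S. g a \<in> S" and gz: "\<forall>a\<in>S. g (z a) = a"
      using zfacts[OF z] by blast
    have zD: "z ` D \<subseteq> D"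
    proof
      fix b assume "b \<in> z ` D"
      then obtain a where a: "a \<in> D" "b = z a" by blast
      have aS: "a \<in> S" using a by (simp add: D_def)
      show "b \<in> D"
      proof (rule ccontr)
        assume "b \<notin> D"
        then have cb: "continuous (at (z a) within S) f" using a zS aS by (auto simp: D_def)
        have zimg: "z ` S \<subseteq> S" using zS by auto
        have cz: "continuous (at a within S) z"
          using zc aS by (simp add: continuous_on_eq_continuous_within)
        have "continuous (at a within S) (f \<circ> z)"
          by (rule continuous_within_compose[OF cz]) (rule continuous_within_subset[OF cb zimg])
        then have c2: "continuous (at a within S) (z \<circ> f)"
          by (rule continuous_transform_within[of _ _ _ 1]) (use aS zf in auto)
        have fimg: "(z \<circ> f) ` S \<subseteq> S" using zS fS by auto
        have cg: "continuous (at ((z \<circ> f) a) within S) g"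
          using gc zS fS aS by (simp add: continuous_on_eq_continuous_within)
        have "continuous (at a within S) (g \<circ> (z \<circ> f))"
          by (rule continuous_within_compose[OF c2]) (rule continuous_within_subset[OF cg fimg])
        then have "continuous (at a within S) f"
          by (rule continuous_transform_within[of _ _ _ 1]) (use aS gz fS in auto)
        then show False using a by (simp add: D_def)
      qed
    qed
    have DS: "D \<subseteq> S" by (auto simp: D_def)
    have injD: "inj_on z D" using zinj DS by (rule inj_on_subset)
    have zDD: "z ` D = D"
      by (rule card_subset_eq[OF finD zD]) (simp add: card_image[OF injD])
    have "(\<Sum>a\<in>D. z a) = (\<Sum>a\<in>z ` D. a)" by (simp add: sum.reindex[OF injD])
    also have "\<dots> = (\<Sum>a\<in>D. a)" using zDD by simp
    finally have s0: "(\<Sum>a\<in>D. z a - a) = 0" by (simp add: sum_subtractf)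
    have nn: "\<And>a. a \<in> D \<Longrightarrow> 0 \<le> z a - a" using zup DS by auto
    have "\<forall>a\<in>D. z a - a = 0" using sum_nonneg_eq_0_iff[OF finD nn] s0 by simp
    then have "z d - d = 0" using d by blast
    then show ?thesis by simp
  qed
  have dens: "\<exists>z\<in>Z. \<exists>x. x \<in> supp_on S z \<and> a < x \<and> x < b" if ab: "0 \<le> a" "a < b" "b \<le> r" for a b
  proof -
    let ?U = "\<Union>z\<in>Z. supp_on S z"
    have "(a+b)/2 \<in> {a<..<b} \<inter> closure ?U" using ab assms(5) unfolding S_def by auto
    then have "{a<..<b} \<inter> closure ?U \<noteq> {}" by blast
    then have "{a<..<b} \<inter> ?U \<noteq> {}" using open_Int_closure_eq_empty[of "{a<..<b}" ?U] by auto
    then show ?thesis by auto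
  qed
  show ?thesis
    unfolding S_def[symmetric] continuous_on_eq_continuous_within
  proof
    fix d assume dS: "d \<in> S"
    show "continuous (at d within S) f"
    proof (rule ccontr)
      assume ncont: "\<not> continuous (at d within S) f"
      then have dD: "d \<in> D" using dS by (simp add: D_def)
      have rc: "(f \<longlongrightarrow> f d) (at_right d)" using assms(8) dS unfolding S_def
        by (simp add: continuous_within)
      have d0: "0 < d"
      proof (rule ccontr)
        assume "\<not> 0 < d"
        then have "d = 0" using dS by (simp add: S_def)
        then have "(f \<longlongrightarrow> f d) (at d within {0..})" using rc by (simp add: at_within_Ici_at_right)
        then have "(f \<longlongrightarrow> f d) (at d within S)"
          by (rule tendsto_within_subset) (auto simp: S_def)
        then show False using ncont by (simp add: continuous_within)
      qed
      have dr: "d < r" using dS by (simp add: S_def)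
      have L: "\<exists>y. d - \<eta> < y \<and> y < d \<and> \<bar>f y - d\<bar> < \<epsilon>" if e: "\<epsilon> > 0" "\<eta> > 0" for \<epsilon> \<eta>
      proof -
        define m where "m = min (min \<epsilon> \<eta>) d"
        have m: "0 < m" "m \<le> \<epsilon>" "m \<le> \<eta>" "m \<le> d" using e d0 by (auto simp: m_def)
        obtain z x where z: "z \<in> Z" and x: "x \<in> supp_on S z" "d - m < x" "x < d"
          using dens[of "d - m" d] m dr by auto
        obtain zc: "continuous_on S z" and zS: "\<forall>a\<in>S. z a \<in> S" and zinj: "inj_on z S"
          and zup: "\<forall>a\<in>S. a \<le> z a" and zint: "is_interval (supp_on S z)"
          and zf: "\<forall>a\<in>S. z (f a) = f (z a)"
          using zfacts[OF z] by blast
        have xS: "x \<in> S" and zx: "z x \<noteq> x" using x by (auto simp: supp_on_def)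
        have "z (f x) \<noteq> f x"
        proof
          assume "z (f x) = f x"
          then have "f (z x) = f x" using zf xS by simp
          then show False using finj zx xS zS by (metis inj_onD)
        qed
        then have u: "f x \<in> supp_on S z" using fS xS by (simp add: supp_on_def)
        have zd: "z d = d" by (rule fixD[OF z dD])
        obtain q where lim: "(\<lambda>k. (z^^k) (f x)) \<longlonglongrightarrow> q" and xq: "x \<le> q" and qd: "q \<le> d"
          using dyn_up(1)[OF zc zS zinj zup zint Sint dS zd x(1) u x(3)] by blast
        have it: "\<forall>k. x \<le> (z^^k) x \<and> (z^^k) x < d"
          using dyn_up(2)[OF zc zS zinj zup zint Sint dS zd x(1) u x(3)] .
        have "q - (d - \<epsilon>) > 0" using xq x m by linarith
        from tendstoD[OF lim this] obtain N where N: "dist ((z^^N) (f x)) q < q - (d - \<epsilon>)"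
          unfolding eventually_sequentially by blast
        have "f ((z^^N) x) = (z^^N) (f x)" using iter_comm[OF zS zf xS] by blast
        then have "\<bar>f ((z^^N) x) - d\<bar> < \<epsilon>" using N qd by (simp add: dist_real_def abs_if split: if_splits)
        moreover have "x \<le> (z^^N) x" "(z^^N) x < d" using it by blast+
        then have "d - \<eta> < (z^^N) x" "(z^^N) x < d" using x m by linarith+
        ultimately show ?thesis by blast
      qed
      have R: "\<exists>y. d < y \<and> y < d + \<eta> \<and> \<bar>f y - d\<bar> < \<epsilon>" if e: "\<epsilon> > 0" "\<eta> > 0" for \<epsilon> \<eta>
      proof -
        define m where "m = min (min \<epsilon> \<eta>) (r - d)"
        have m: "0 < m" "m \<le> \<epsilon>" "m \<le> \<eta>" "m \<le> r - d" using e dr by (auto simp: m_def)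
        obtain z x where z: "z \<in> Z" and x: "x \<in> supp_on S z" "d < x" "x < d + m"
          using dens[of d "d + m"] m d0 by auto
        obtain g where zc: "continuous_on S z" and zS: "\<forall>a\<in>S. z a \<in> S" and zinj: "inj_on z S"
          and zup: "\<forall>a\<in>S. a \<le> z a" and zint: "is_interval (supp_on S z)"
          and zf: "\<forall>a\<in>S. z (f a) = f (z a)"
          and gc: "continuous_on S g" and gS: "\<forall>a\<in>S. g a \<in> S" and gz: "\<forall>a\<in>S. g (z a) = a"
          and zg: "\<forall>a\<in>S. z (g a) = a"
          using zfacts[OF z] by blast
        have ginj: "inj_on g S" by (rule inj_on_inverseI[where g=z]) (use zg in blast)
        have gdown: "\<forall>a\<in>S. g a \<le> a"
        proof
          fix a assume aS: "a \<in> S"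
          have "g a \<le> z (g a)" using zup gS aS by blast
          then show "g a \<le> a" using zg aS by simp
        qed
        have suppeq: "supp_on S g = supp_on S z"
        proof -
          have "g a \<noteq> a \<longleftrightarrow> z a \<noteq> a" if aS: "a \<in> S" for a
          proof
            assume "g a \<noteq> a" then show "z a \<noteq> a" using gz aS by metis
          next
            assume "z a \<noteq> a" then show "g a \<noteq> a" using zg aS by metis
          qed
          then show ?thesis unfolding supp_on_def by blast
        qed
        have gint: "is_interval (supp_on S g)" using zint suppeq by simp
        have gf: "\<forall>a\<in>S. g (f a) = f (g a)"
        proof
          fix a assume aS: "a \<in> S"
          have "z (f (g a)) = f (z (g a))" using zf gS aS by blast
          also have "\<dots> = f a" using zg aS by simp
          finally have "z (f (g a)) = f a" .
          then have "g (z (f (g a))) = g (f a)" by simp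
          moreover have "g (z (f (g a))) = f (g a)" using gz fS gS aS by blast
          ultimately show "g (f a) = f (g a)" by simp
        qed
        have xS: "x \<in> S" and zx: "z x \<noteq> x" using x by (auto simp: supp_on_def)
        have "z (f x) \<noteq> f x"
        proof
          assume "z (f x) = f x"
          then have "f (z x) = f x" using zf xS by simp
          then show False using finj zx xS zS by (metis inj_onD)
        qed
        then have u: "f x \<in> supp_on S g" using fS xS suppeq by (simp add: supp_on_def)
        have xg: "x \<in> supp_on S g" using x suppeq by simp
        have gd: "g d = d" using fixD[OF z dD] gz dS by (metis)
        obtain q where lim: "(\<lambda>k. (g^^k) (f x)) \<longlonglongrightarrow> q" and xq: "q \<le> x" and qd: "d \<le> q"
          using dyn_down(1)[OF gc gS ginj gdown gint Sint dS gd xg u x(2)] by blast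
        have it: "\<forall>k. (g^^k) x \<le> x \<and> d < (g^^k) x"
          using dyn_down(2)[OF gc gS ginj gdown gint Sint dS gd xg u x(2)] .
        have "(d + \<epsilon>) - q > 0" using xq x m by linarith
        from tendstoD[OF lim this] obtain N where N: "dist ((g^^N) (f x)) q < (d + \<epsilon>) - q"
          unfolding eventually_sequentially by blast
        have "f ((g^^N) x) = (g^^N) (f x)" using iter_comm[OF gS gf xS] by blast
        then have "\<bar>f ((g^^N) x) - d\<bar> < \<epsilon>" using N qd by (simp add: dist_real_def abs_if split: if_splits)
        moreover have "(g^^N) x \<le> x" "d < (g^^N) x" using it by blast+
        then have "(g^^N) x < d + \<eta>" "d < (g^^N) x" using x m by linarith+
        ultimately show ?thesis by blast
      qed
      have fd: "f d = d"
      proof (rule ccontr)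
        assume ne: "f d \<noteq> d"
        define e where "e = \<bar>f d - d\<bar> / 2"
        have e: "e > 0" using ne by (simp add: e_def)
        from tendstoD[OF rc e] obtain b where b: "b > d" "\<forall>y>d. y < b \<longrightarrow> dist (f y) (f d) < e"
          unfolding eventually_at_right_field by blast
        obtain y where y: "d < y" "y < d + (b - d)" "\<bar>f y - d\<bar> < e" using R[OF e, of "b - d"] b by auto
        have "dist (f y) (f d) < e" using b y by auto
        moreover have "\<bar>f d - d\<bar> \<le> \<bar>f d - f y\<bar> + \<bar>f y - d\<bar>"
          using abs_triangle_ineq[of "f d - f y" "f y - d"] by simp
        moreover have "\<bar>f d - f y\<bar> = \<bar>f y - f d\<bar>" by (rule abs_minus_commute)
        ultimately show False using y e unfolding e_def dist_real_def by linarith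
      qed
      obtain \<delta> where \<delta>: "\<delta> > 0" "\<forall>x\<in>D. x \<noteq> d \<longrightarrow> \<delta> \<le> dist d x"
        using finite_set_avoid[OF finD, of d] by blast
      define \<delta>1 where "\<delta>1 = min \<delta> d"
      have \<delta>1: "\<delta>1 > 0" "\<delta>1 \<le> d" "\<delta>1 \<le> \<delta>" using \<delta> d0 by (auto simp: \<delta>1_def)
      have contnear: "continuous (at t within S) f" if t: "d - \<delta>1 < t" "t < d" for t
      proof -
        have tS: "t \<in> S" using t \<delta>1 dr by (simp add: S_def)
        have "t \<notin> D"
        proof
          assume "t \<in> D"
          then have "\<delta> \<le> dist d t" using \<delta> t by auto
          then show False using t \<delta>1 by (simp add: dist_real_def)
        qed
        then show ?thesis using tS by (simp add: D_def)
      qed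
      have lc: "(f \<longlongrightarrow> f d) (at_left d)"
      proof (rule tendstoI)
        fix e :: real assume e: "e > 0"
        obtain y1 where y1: "d - \<delta>1 < y1" "y1 < d" "\<bar>f y1 - d\<bar> < e" using L[OF e \<delta>1(1)] by blast
        show "eventually (\<lambda>y. dist (f y) (f d) < e) (at_left d)"
          unfolding eventually_at_left_field
        proof (intro exI[of _ y1] conjI allI impI)
          show "y1 < d" by fact
          fix y assume y: "y1 < y" "y < d"
          obtain y2 where y2: "d - (d - y) < y2" "y2 < d" "\<bar>f y2 - d\<bar> < e" using L[OF e, of "d - y"] y by auto
          have sub: "{y1..y2} \<subseteq> S" using y1 y2 \<delta>1 dr by (auto simp: S_def)
          have "continuous_on {y1..y2} f"
            unfolding continuous_on_eq_continuous_within
          proof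
            fix t assume t: "t \<in> {y1..y2}"
            have "continuous (at t within S) f" by (rule contnear) (use t y1 y2 in auto)
            then show "continuous (at t within {y1..y2}) f" using sub by (rule continuous_within_subset)
          qed
          moreover have "inj_on f {y1..y2}" using finj sub by (rule inj_on_subset)
          ultimately have "(f y1 < f y \<and> f y < f y2) \<or> (f y2 < f y \<and> f y < f y1)"
            using continuous_inj_imp_mono[of y1 y y2 f] y y2 by auto
          then show "dist (f y) (f d) < e" using y1 y2 fd by (auto simp: dist_real_def)
        qed
      qed
      have "continuous (at d) f"
        unfolding continuous_at by (rule filterlim_split_at[OF lc rc])
      then show False using ncont continuous_at_imp_continuous_within by blast
    qed
  qed
qed

end
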